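(* Let $\{\phi_m\}_{m\in\mathbb N}\subset L^1(\mathbb R^n_+,sr)$ satisfy: (1) $\phi_m\ge0$ on $\mathbb R^n_+$; (2) $\int_{\mathbb R^n_+}\phi_m(x)s(x)r(x)\,dx=1$ for all $m$; (3) for every $\eta>0$, $\lim_{m\to\infty}\int_{\|x\|>\eta}\phi_m(x)r(x)s(x)\,dx=0$. Let $f\in L^\infty(\mathbb R^n_+,r)$ be continuous at $x_0\in\mathbb R^n_+$. Then $\lim_{m\to\infty}(f\sharp\phi_m)(x_0)=f(x_0)$. Moreover, if $rf$ is uniformly continuous on $\mathbb R^n_+$, then $\lim_{m\to\infty}\|f\sharp\phi_m-f\|_{L^\infty(\mathbb R^n_+,r)}=0$.
   Context: $\mu=(\mu_1,\dots,\mu_n)$ with $\mu_i>-\tfrac12$; $\mathbb R^n_+=(0,\infty)^n$; $x^\beta=\prod_ix_i^{\beta_i}$; $C_\mu=\prod_i2^{\mu_i}\Gamma(\mu_i+1)$, $s(x)=x^{2\mu+1}/C_\mu$, $r(x)=x^{-\mu-1/2}$. $L^1(\mathbb R^n_+,sr)$ has norm $\int|f|sr\,dx$, $L^\infty(\mathbb R^n_+,r)$ has norm $\operatorname{ess\,sup}|rf|$. For $u,v,w>0$ with $|u-v|<w<u+v$ let $A(u,v,w)=\frac14\sqrt{[(u+v)^2-w^2][w^2-(u-v)^2]}$; for $\alpha>-\frac12$, $D_\alpha(u,v,w)=\frac{2^{\alpha-1}(uvw)^{-\alpha+1/2}}{\Gamma(\alpha+1/2)\sqrt\pi}A(u,v,w)^{2\alpha-1}$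 if $|u-v|<w<u+v$ and $0$ otherwise; $\mathbf D_\mu(x,y,z)=\prod_iD_{\mu_i}(x_i,y_i,z_i)$; $(f\sharp g)(x)=\int\int\mathbf D_\mu(x,y,z)f(y)g(z)\,dy\,dz$. *)

theory Defs
  imports "HOL-Analysis.Analysis" "HOL-Probability.Essential_Supremum"
begin

definition Rpos :: "(real^'n) set" where
  "Rpos = {x. \<forall>i. 0 < x $ i}"

definition Cmu :: "real^'n \<Rightarrow> real" where
  "Cmu \<mu> = (\<Prod>i\<in>UNIV. 2 powr (\<mu> $ i) * Gamma (\<mu> $ i + 1))"

definition sfun :: "real^'n \<Rightarrow> real^'n \<Rightarrow> real" where
  "sfun \<mu> x = (\<Prod>i\<in>UNIV. (x $ i) powr (2 * \<mu> $ i + 1)) / Cmu \<mu>"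

definition rfun :: "real^'n \<Rightarrow> real^'n \<Rightarrow> real" where
  "rfun \<mu> x = (\<Prod>i\<in>UNIV. (x $ i) powr (- \<mu> $ i - 1/2))"

definition Afun :: "real \<Rightarrow> real \<Rightarrow> real \<Rightarrow> real" where
  "Afun u v w = (1/4) * sqrt (((u + v)^2 - w^2) * (w^2 - (u - v)^2))"

definition Dfun :: "real \<Rightarrow> real \<Rightarrow> real \<Rightarrow> real \<Rightarrow> real" where
  "Dfun \<alpha> u v w =
     (if \<bar>u - v\<bar> < w \<and> w < u + v then
        2 powr (\<alpha> - 1) * (u * v * w) powr (- \<alpha> + 1/2)
          / (Gamma (\<alpha> + 1/2) * sqrt pi) * (Afun u v w) powr (2 * \<alpha> - 1)
      else 0)"

definition Dmu :: "real^'n \<Rightarrow> real^'n \<Rightarrow> real^'n \<Rightarrow> real^'n \<Rightarrow> real" where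
  "Dmu \<mu> x y z = (\<Prod>i\<in>UNIV. Dfun (\<mu> $ i) (x $ i) (y $ i) (z $ i))"

definition hconv :: "real^'n \<Rightarrow> (real^'n \<Rightarrow> real) \<Rightarrow> (real^'n \<Rightarrow> real) \<Rightarrow> real^'n \<Rightarrow> real" where
  "hconv \<mu> f g x =
     (LINT p : Rpos \<times> Rpos | (lborel \<Otimes>\<^sub>M lborel).
        Dmu \<mu> x (fst p) (snd p) * f (fst p) * g (snd p))"

definition in_L1_sr :: "real^'n \<Rightarrow> (real^'n \<Rightarrow> real) \<Rightarrow> bool" where
  "in_L1_sr \<mu> f \<longleftrightarrow> set_integrable lborel Rpos (\<lambda>x. f x * sfun \<mu> x * rfun \<mu> x)"

definition Linf_r_norm :: "real^'n \<Rightarrow> (real^'n \<Rightarrow> real) \<Rightarrow> ereal" where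
  "Linf_r_norm \<mu> f = esssup (restrict_space lborel Rpos) (\<lambda>x. ereal \<bar>rfun \<mu> x * f x\<bar>)"

definition in_Linf_r :: "real^'n \<Rightarrow> (real^'n \<Rightarrow> real) \<Rightarrow> bool" where
  "in_Linf_r \<mu> f \<longleftrightarrow> f \<in> borel_measurable (restrict_space lborel Rpos)
       \<and> Linf_r_norm \<mu> f < \<infinity>"

end

theory Submission
  imports Defs
begin

lemma Rpos_eq: "(Rpos :: (real^'n) set) = (\<Inter>i. {x. 0 < x $ i})"
  by (auto simp: Rpos_def)

lemma open_Rpos: "open (Rpos :: (real^'n) set)"
  unfolding Rpos_eq
  by (intro open_INT ballI open_Collect_less continuous_intros) simp

lemma Rpos_sets[measurable]: "(Rpos :: (real^'n) set) \<in> sets borel"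
  using open_Rpos by (rule borel_open)

lemma Rpos_lborel[measurable]: "(Rpos :: (real^'n) set) \<in> sets lborel"
  using Rpos_sets by simp

lemma Dfun_measurable[measurable]:
  assumes [measurable]: "f \<in> borel_measurable M" "g \<in> borel_measurable M" "h \<in> borel_measurable M"
  shows "(\<lambda>x. Dfun a (f x) (g x) (h x)) \<in> borel_measurable M"
  unfolding Dfun_def Afun_def by measurable

lemma vec_nth_measurable[measurable]:
  assumes [measurable]: "f \<in> borel_measurable M"
  shows "(\<lambda>x. (f x :: real^'n) $ i) \<in> borel_measurable M"
proof -
  have "(\<lambda>x::real^'n. x $ i) \<in> borel_measurable borel"
    by (intro borel_measurable_continuous_onI continuous_intros)
  then show ?thesis using measurable_compose[OF assms] by blast
qed

lemma Dmu_measurable[measurable]: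
  assumes [measurable]: "f \<in> borel_measurable M" "g \<in> borel_measurable M" "h \<in> borel_measurable M"
  shows "(\<lambda>x. Dmu mu (f x) (g x) (h x)) \<in> borel_measurable M"
  unfolding Dmu_def by measurable

lemma rfun_measurable[measurable]: "rfun mu \<in> borel_measurable borel"
  unfolding rfun_def by measurable
lemma sfun_measurable[measurable]: "sfun mu \<in> borel_measurable borel"
  unfolding sfun_def by measurable

lemma prod_Basis_vec:
  "(\<Prod>b\<in>(Basis :: (real^'n) set). h b) = (\<Prod>i\<in>UNIV. h (axis i 1))"
proof -
  have B: "(Basis :: (real^'n) set) = range (\<lambda>i. axis i 1)"
    by (auto simp: Basis_vec_def)
  have "inj (\<lambda>i::'n. axis i (1::real))"
    by (auto simp: inj_on_def axis_eq_axis)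
  then show ?thesis unfolding B by (simp add: prod.reindex)
qed



definition Qf :: "real \<Rightarrow> real \<Rightarrow> real \<Rightarrow> real" where
  "Qf u w v = ((u+w)^2 - v^2) * (v^2 - (u-w)^2)"

definition c1 :: "real \<Rightarrow> real \<Rightarrow> real \<Rightarrow> real" where
  "c1 a u w = 2 powr (a-1) * (u*w) powr (-a+1/2) / (Gamma (a+1/2) * sqrt pi) * (1/4) powr (2*a-1)"

lemma Qf_alt: "((u+v)^2-w^2)*(w^2-(u-v)^2) = Qf u w v"
  unfolding Qf_def by algebra

lemma cond_iff:
  fixes u v w :: real
  assumes "u > 0" "w > 0"
  shows "(0 < v \<and> \<bar>u - v\<bar> < w \<and> w < u + v) \<longleftrightarrow> (\<bar>u-w\<bar> < v \<and> v < u + w)"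
  using assms by (auto simp: abs_less_iff abs_if split: if_splits)

lemma D1_pointwise:
  fixes u v w a :: real
  assumes u: "u > 0" and w: "w > 0"
  shows "indicator {0<..} v * Dfun a u v w * v powr (a+1/2)
       = c1 a u w * (indicator {\<bar>u-w\<bar>..u+w} v * (v * Qf u w v powr (a - 1/2)))"
proof (cases "0 < v \<and> \<bar>u - v\<bar> < w \<and> w < u + v")
  case True
  then have v: "v > 0" and iv: "\<bar>u-w\<bar> < v" "v < u + w" using cond_iff[OF u w] by auto
  have Qpos: "Qf u w v > 0"
  proof -
    have "(u+w)^2 - v^2 > 0" using iv v u w
      by (smt (verit) mult_strict_mono power2_eq_square)
    moreover have "v^2 - (u-w)^2 > 0"
    proof -
      have "(u-w)^2 = \<bar>u-w\<bar>^2" by simp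
      also have "\<dots> < v^2" using iv by (intro power_strict_mono) auto
      finally show ?thesis by simp
    qed
    ultimately show ?thesis unfolding Qf_def by simp
  qed
  have A: "Afun u v w = 1/4 * sqrt (Qf u w v)"
    unfolding Afun_def Qf_alt by simp
  have Ap: "Afun u v w powr (2*a-1) = (1/4) powr (2*a-1) * Qf u w v powr (a - 1/2)"
  proof -
    have "Afun u v w powr (2*a-1) = (1/4) powr (2*a-1) * sqrt (Qf u w v) powr (2*a-1)"
      unfolding A by (subst powr_mult) auto
    also have "sqrt (Qf u w v) = Qf u w v powr (1/2)"
      using Qpos by (simp add: powr_half_sqrt)
    also have "(Qf u w v powr (1/2)) powr (2*a-1) = Qf u w v powr (a - 1/2)"
      by (simp add: powr_powr algebra_simps)
    finally show ?thesis .
  qed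
  have P: "(u * v * w) powr (-a+1/2) * v powr (a+1/2) = (u*w) powr (-a+1/2) * v"
  proof -
    have "(u * v * w) powr (-a+1/2) = (u*w) powr (-a+1/2) * v powr (-a+1/2)"
      using u v w by (simp add: powr_mult mult.commute mult.left_commute)
    moreover have "v powr (-a+1/2) * v powr (a+1/2) = v"
      using v by (simp add: powr_add[symmetric])
    ultimately show ?thesis by (simp add: mult.assoc)
  qed
  have "indicator {0<..} v * Dfun a u v w * v powr (a+1/2)
     = 2 powr (a-1) / (Gamma (a+1/2) * sqrt pi) * ((u * v * w) powr (-a+1/2) * v powr (a+1/2))
       * Afun u v w powr (2*a-1)"
    using True v by (simp add: Dfun_def)
  also have "\<dots> = c1 a u w * (v * Qf u w v powr (a - 1/2))"
    unfolding P Ap c1_def by (simp add: field_simps)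
  finally show ?thesis using iv by simp
next
  case False
  have L: "indicator {0<..} v * Dfun a u v w * v powr (a+1/2) = 0"
    using False by (auto simp: Dfun_def)
  have "indicator {\<bar>u-w\<bar>..u+w} v * (v * Qf u w v powr (a - 1/2)) = 0"
  proof (cases "v \<in> {\<bar>u-w\<bar>..u+w}")
    case True
    show ?thesis
    proof (cases "v = 0")
      case False
      then have "v > 0" using True by auto
      then have "\<not> (\<bar>u-w\<bar> < v \<and> v < u + w)" using \<open>\<not> (0 < v \<and> _)\<close> cond_iff[OF u w] by auto
      then have "v = \<bar>u-w\<bar> \<or> v = u+w" using True by auto
      then have "v^2 = (u-w)^2 \<or> v^2 = (u+w)^2" by auto
      then have "Qf u w v = 0" unfolding Qf_def by auto
      then show ?thesis by simp
    qed simp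
  qed simp
  then show ?thesis using L by (metis mult_zero_right)
qed



lemma beta_nn:
  fixes u w b :: real
  assumes u: "u > 0" and w: "w > 0" and b: "b > 0"
  shows "(\<integral>\<^sup>+v. ennreal (indicator {\<bar>u-w\<bar>..u+w} v * (v * Qf u w v powr (b - 1))) \<partial>lborel)
       = ennreal ((4*u*w) powr (2*b-1) / 2 * Beta b b)"
proof -
  define L where "L = 4*u*w"
  have L: "L > 0" using u w by (simp add: L_def)
  define g where "g v = (v^2 - (u-w)^2) / L" for v
  define g' where "g' v = 2 * v / L" for v
  define F where "F t = t powr (b-1) * (1-t) powr (b-1) * (L powr (2*b-1) / 2)" for t
  have ga: "g \<bar>u-w\<bar> = 0" by (simp add: g_def)
  have gb: "g (u+w) = 1" using L u w by (simp add: g_def L_def field_simps power2_eq_square)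
  have le: "\<bar>u-w\<bar> \<le> u + w" using u w by simp
  have "(\<integral>\<^sup>+t. ennreal (F t * indicator {g \<bar>u-w\<bar>..g (u+w)} t) \<partial>lborel)
      = (\<integral>\<^sup>+v. ennreal (F (g v) * g' v * indicator {\<bar>u-w\<bar>..u+w} v) \<partial>lborel)"
  proof (rule nn_integral_substitution)
    show "set_borel_measurable borel {g \<bar>u - w\<bar>..g (u + w)} F"
      unfolding F_def set_borel_measurable_def by measurable
    show "(g has_real_derivative g' x) (at x)" for x
      unfolding g_def g'_def using L by (auto intro!: derivative_eq_intros)
    show "continuous_on {\<bar>u - w\<bar>..u + w} g'"
      unfolding g'_def using L by (intro continuous_intros) auto
    show "0 \<le> g' x" if "x \<in> {\<bar>u - w\<bar>..u + w}" for x
      using that L by (auto simp: g'_def)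
  qed (rule le)
  also have "(\<lambda>v. ennreal (F (g v) * g' v * indicator {\<bar>u-w\<bar>..u+w} v))
           = (\<lambda>v. ennreal (indicator {\<bar>u-w\<bar>..u+w} v * (v * Qf u w v powr (b - 1))))"
  proof
    fix v
    show "ennreal (F (g v) * g' v * indicator {\<bar>u-w\<bar>..u+w} v)
        = ennreal (indicator {\<bar>u-w\<bar>..u+w} v * (v * Qf u w v powr (b - 1)))"
    proof (cases "v \<in> {\<bar>u-w\<bar>..u+w}")
      case True
      then have v0: "v \<ge> 0" by auto
      define x1 where "x1 = v^2 - (u-w)^2"
      define x2 where "x2 = (u+w)^2 - v^2"
      have x1: "x1 \<ge> 0"
      proof -
        have "(u-w)^2 = \<bar>u-w\<bar>^2" by simp
        also have "\<dots> \<le> v^2" using True by (intro power_mono) auto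
        finally show ?thesis by (simp add: x1_def)
      qed
      have x2: "x2 \<ge> 0" unfolding x2_def using True v0 by (intro power_mono[THEN diff_ge_0_iff_ge[THEN iffD2]]) auto
      have gv: "g v = x1 / L" by (simp add: g_def x1_def)
      have g1: "1 - g v = x2 / L" using L u w by (simp add: g_def x2_def L_def field_simps power2_eq_square)
      have Q: "Qf u w v = x2 * x1" by (simp add: Qf_def x1_def x2_def)
      have Lp: "L powr (2*b-1) = L powr (b-1) * L powr (b-1) * L"
      proof -
        have e: "2*b-1 = ((b-1)+(b-1)) + 1" by simp
        show ?thesis by (subst e, subst powr_add, subst powr_add) (use L in simp)
      qed
      have "F (g v) * g' v = x1 powr (b-1) * x2 powr (b-1) * v"
        unfolding F_def gv g1[unfolded gv] g'_def Lp
        using L x1 x2 by (simp add: powr_divide field_simps)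
      also have "\<dots> = v * Qf u w v powr (b - 1)"
        unfolding Q using x1 x2 by (simp add: powr_mult)
      finally show ?thesis using True by simp
    qed simp
  qed
  also have "{g \<bar>u-w\<bar>..g (u+w)} = {0..1}" unfolding ga gb ..
  also have "(\<integral>\<^sup>+t. ennreal (F t * indicator {0..1} t) \<partial>lborel)
           = (\<integral>\<^sup>+t. ennreal (indicator {0..1} t * F t) \<partial>lborel)"
    by (simp add: mult.commute)
  also have "\<dots> = ennreal (Beta b b * (L powr (2*b-1) / 2))"
  proof (rule nn_integral_has_integral_lebesgue)
    show "0 \<le> F x" if "x \<in> {0..1}" for x using that L by (simp add: F_def)
    show "(F has_integral Beta b b * (L powr (2 * b - 1) / 2)) {0..1}"
      unfolding F_def by (intro has_integral_mult_left has_integral_Beta_real b)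
  qed
  finally show ?thesis by (simp add: L_def mult.commute)
qed

lemma Gamma_dup_real:
  fixes x :: real
  assumes x: "x > 0"
  shows "Gamma x * Gamma (x + 1/2) = 2 powr (1 - 2*x) * sqrt pi * Gamma (2*x)"
proof -
  have nn: "complex_of_real y \<notin> \<int>\<^sub>\<le>\<^sub>0" if "y > 0" for y :: real
  proof
    assume "complex_of_real y \<in> \<int>\<^sub>\<le>\<^sub>0"
    then obtain n where n: "complex_of_real y = of_int n" "n \<le> 0" by (auto elim!: nonpos_Ints_cases)
    then have "Re (complex_of_real y) = Re (of_int n)" by simp
    then have "y = of_int n" by simp
    then show False using n that by simp
  qed
  have n1: "complex_of_real x \<notin> \<int>\<^sub>\<le>\<^sub>0" using nn x by blast
  have n2: "complex_of_real x + 1/2 \<notin> \<int>\<^sub>\<le>\<^sub>0"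
  proof -
    have "complex_of_real x + 1/2 = complex_of_real (x + 1/2)" by simp
    then show ?thesis using nn[of "x+1/2"] x by simp
  qed
  have "complex_of_real (Gamma x * Gamma (x + 1/2))
      = Gamma (complex_of_real x) * Gamma (complex_of_real x + 1/2)"
    by (simp add: Gamma_complex_of_real[symmetric])
  also have "\<dots> = exp ((1 - 2 * complex_of_real x) * of_real (ln 2)) * of_real (sqrt pi)
                  * Gamma (2 * complex_of_real x)"
    by (rule Gamma_legendre_duplication[OF n1 n2])
  also have "\<dots> = complex_of_real (2 powr (1 - 2*x) * sqrt pi * Gamma (2*x))"
  proof -
    have "exp ((1 - 2 * complex_of_real x) * of_real (ln 2)) = complex_of_real (exp ((1 - 2*x) * ln 2))"
      by (simp flip: exp_of_real)
    moreover have "Gamma (2 * complex_of_real x) = complex_of_real (Gamma (2*x))"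
      by (simp flip: Gamma_complex_of_real)
    ultimately show ?thesis by (simp add: powr_def)
  qed
  finally show ?thesis by (simp only: of_real_eq_iff)
qed



lemma Qf_meas[measurable]: "Qf u w \<in> borel_measurable borel"
  unfolding Qf_def by measurable

lemma kernel1:
  fixes a u w :: real
  assumes a: "a > -1/2" and u: "u > 0" and w: "w > 0"
  shows "(\<integral>\<^sup>+v. ennreal (indicator {0<..} v * Dfun a u v w * v powr (a+1/2)) \<partial>lborel)
       = ennreal ((u*w) powr (a+1/2) / (2 powr a * Gamma (a+1)))"
proof -
  define b where "b = a + 1/2"
  have b: "b > 0" using a by (simp add: b_def)
  have G: "Gamma b > 0" using b by (simp add: Gamma_real_pos)
  have bb: "b - 1 = a - 1/2" by (simp add: b_def)
  have c1: "c1 a u w \<ge> 0" using G unfolding c1_def b_def by simp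
  have "(\<integral>\<^sup>+v. ennreal (indicator {0<..} v * Dfun a u v w * v powr (a+1/2)) \<partial>lborel)
      = (\<integral>\<^sup>+v. ennreal (c1 a u w) * ennreal (indicator {\<bar>u-w\<bar>..u+w} v * (v * Qf u w v powr (b - 1))) \<partial>lborel)"
  proof (rule nn_integral_cong)
    fix v
    show "ennreal (indicator {0<..} v * Dfun a u v w * v powr (a+1/2))
        = ennreal (c1 a u w) * ennreal (indicator {\<bar>u-w\<bar>..u+w} v * (v * Qf u w v powr (b - 1)))"
      unfolding D1_pointwise[OF u w] bb
      by (rule ennreal_mult) (use c1 in \<open>auto simp: indicator_def\<close>)
  qed
  also have "\<dots> = ennreal (c1 a u w) * ennreal ((4*u*w) powr (2*b-1) / 2 * Beta b b)"
    by (subst nn_integral_cmult) (auto simp: beta_nn[OF u w b] simp del: Beta_def)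
  also have "\<dots> = ennreal (c1 a u w * ((4*u*w) powr (2*b-1) / 2 * Beta b b))"
    using c1 b by (subst ennreal_mult) (auto simp: Beta_def Gamma_real_pos)
  also have "c1 a u w * ((4*u*w) powr (2*b-1) / 2 * Beta b b)
           = (u*w) powr (a+1/2) / (2 powr a * Gamma (a+1))"
  proof -
    define H where "H = Gamma (a+1)"
    define K where "K = Gamma (2*a+1)"
    define s where "s = sqrt pi"
    define P where "P = u*w"
    define T where "T = 2 powr a"
    have H: "H > 0" using a by (simp add: H_def Gamma_real_pos)
    have K: "K > 0" using a by (simp add: K_def Gamma_real_pos)
    have s: "s > 0" by (simp add: s_def)
    have P: "P > 0" using u w by (simp add: P_def)
    have T: "T > 0" by (simp add: T_def)
    have dup: "Gamma b * H = s * K / (T*T)"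
    proof -
      have "Gamma b * Gamma (b + 1/2) = 2 powr (1 - 2*b) * sqrt pi * Gamma (2*b)"
        by (rule Gamma_dup_real[OF b])
      moreover have "b + 1/2 = a + 1" "1 - 2*b = -(a+a)" "2*b = 2*a+1" by (simp_all add: b_def)
      moreover have "2 powr (-(a+a)) = 1 / (T*T)"
        unfolding T_def powr_minus powr_add[symmetric] by (simp add: divide_simps)
      ultimately show ?thesis by (simp add: H_def K_def s_def)
    qed
    have beta: "Beta b b = Gamma b * Gamma b / K"
      by (simp add: Beta_def K_def b_def)
    have e1: "(4*u*w) powr (2*b-1) = 4 powr (2*a) * P powr (2*a)"
      by (simp add: b_def P_def powr_mult mult.assoc)
    have e2: "(1/4::real) powr (2*a-1) * 4 powr (2*a) = 4"
    proof -
      have "(1/4::real) powr (2*a-1) = 4 powr (1 - 2*a)" by (simp add: powr_divide powr_minus_divide[symmetric] powr_minus)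
      then show ?thesis by (simp add: powr_add[symmetric])
    qed
    have e3: "P powr (-a+1/2) * P powr (2*a) = P powr (a+1/2)"
      by (simp add: powr_add[symmetric])
    have e4: "2 powr (a-1) = T / 2" by (simp add: T_def powr_diff)
    have "c1 a u w * ((4*u*w) powr (2*b-1) / 2 * Beta b b)
        = (2 powr (a-1)) * (P powr (-a+1/2) * P powr (2*a)) * ((1/4::real) powr (2*a-1) * 4 powr (2*a))
          * Gamma b / (s * K * 2)"
      unfolding c1_def e1 beta using G K by (simp add: field_simps b_def P_def s_def)
    also have "\<dots> = T * P powr (a+1/2) * Gamma b / (s * K)"
      unfolding e2 e3 e4 by simp
    also have "\<dots> = P powr (a+1/2) / (T * H)"
      using dup G H K s T by (simp add: field_simps)
    finally show ?thesis by (simp add: P_def T_def H_def)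
  qed
  finally show ?thesis .
qed



definition rho :: "real^'n \<Rightarrow> real^'n \<Rightarrow> real" where
  "rho mu y = (\<Prod>i\<in>UNIV. (y $ i) powr (mu $ i + 1/2))"

lemma rho_measurable[measurable]: "rho mu \<in> borel_measurable borel"
  unfolding rho_def by measurable

lemma rho_nonneg: "rho mu y \<ge> 0"
  unfolding rho_def by (intro prod_nonneg) auto

lemma rho_pos: assumes "y \<in> Rpos" shows "rho mu y > 0"
proof -
  have "\<forall>i. y$i > 0" using assms by (simp add: Rpos_def)
  then show ?thesis unfolding rho_def by (intro prod_pos) (metis powr_gt_zero less_irrefl)
qed

lemma Dfun_nonneg: "a > -1/2 \<Longrightarrow> 0 \<le> Dfun a u v w"
  unfolding Dfun_def by (auto intro!: divide_nonneg_pos mult_nonneg_nonneg Gamma_real_pos)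

lemma Dmu_nonneg: "\<forall>i. mu $ i > -1/2 \<Longrightarrow> 0 \<le> Dmu mu x y z"
  unfolding Dmu_def by (intro prod_nonneg) (auto intro: Dfun_nonneg)

lemma Cmu_pos: assumes "\<forall>i. mu $ i > -1/2" shows "Cmu mu > 0"
  unfolding Cmu_def
proof (intro prod_pos mult_pos_pos Gamma_real_pos)
  fix i show "0 < (2::real) powr (mu$i)" by simp
  show "0 < mu$i+1" using assms[rule_format, of i] by simp
qed

lemma Cfac_pos: assumes "(m::real) > -1/2" shows "0 < 2 powr m * Gamma (m+1)"
  using assms by (intro mult_pos_pos Gamma_real_pos) auto

lemma indicator_Rpos_prod:
  "indicator Rpos y = (\<Prod>i\<in>UNIV. indicator {0<..} ((y::real^'n) $ i) :: real)"
proof (cases "y \<in> Rpos")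
  case True then show ?thesis by (auto simp: Rpos_def indicator_def)
next
  case False
  then obtain i where "\<not> 0 < y $ i" by (auto simp: Rpos_def)
  then have "(\<Prod>i\<in>UNIV. indicator {0<..} ((y::real^'n) $ i) :: real) = 0"
    by (intro prod_zero) (auto intro!: exI[of _ i])
  then show ?thesis using False by simp
qed

lemma kernelN:
  fixes mu x z :: "real^'n"
  assumes mu: "\<forall>i. mu $ i > -1/2" and x: "x \<in> Rpos" and z: "z \<in> Rpos"
  shows "(\<integral>\<^sup>+y. ennreal (indicator Rpos y * Dmu mu x y z * rho mu y) \<partial>lborel)
       = ennreal (rho mu x * rho mu z / Cmu mu)"
proof -
  define F where "F b t = ennreal (indicator {0<..} t * Dfun (mu \<bullet> b) (x \<bullet> b) t (z \<bullet> b) * t powr (mu \<bullet> b + 1/2))"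
    for b :: "real^'n" and t :: real
  have eqF: "(\<lambda>y. ennreal (indicator Rpos y * Dmu mu x y z * rho mu y)) = (\<lambda>y. \<Prod>b\<in>Basis. F b (y \<bullet> b))"
  proof
    fix y :: "real^'n"
    have "(\<Prod>b\<in>Basis. F b (y \<bullet> b))
        = (\<Prod>i\<in>UNIV. ennreal (indicator {0<..} (y$i) * Dfun (mu$i) (x$i) (y$i) (z$i) * (y$i) powr (mu$i + 1/2)))"
      unfolding prod_Basis_vec F_def by (simp add: inner_axis)
    also have "\<dots> = ennreal (\<Prod>i\<in>UNIV. indicator {0<..} (y$i) * Dfun (mu$i) (x$i) (y$i) (z$i) * (y$i) powr (mu$i + 1/2))"
      using mu by (intro prod_ennreal) (auto intro!: mult_nonneg_nonneg Dfun_nonneg)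
    also have "(\<Prod>i\<in>UNIV. indicator {0<..} (y$i) * Dfun (mu$i) (x$i) (y$i) (z$i) * (y$i) powr (mu$i + 1/2))
             = indicator Rpos y * Dmu mu x y z * rho mu y"
      unfolding indicator_Rpos_prod Dmu_def rho_def prod.distrib ..
    finally show "ennreal (indicator Rpos y * Dmu mu x y z * rho mu y) = (\<Prod>b\<in>Basis. F b (y \<bullet> b))" ..
  qed
  have "(\<integral>\<^sup>+y. ennreal (indicator Rpos y * Dmu mu x y z * rho mu y) \<partial>lborel)
      = (\<Prod>b\<in>Basis. (\<integral>\<^sup>+t. F b t \<partial>lborel))"
    unfolding eqF by (rule nn_integral_lborel_prod) (auto simp: F_def)
  also have "\<dots> = (\<Prod>i\<in>UNIV. (\<integral>\<^sup>+t. F (axis i 1) t \<partial>lborel))"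
    by (rule prod_Basis_vec)
  also have "\<dots> = (\<Prod>i\<in>UNIV. ennreal ((x$i * z$i) powr (mu$i+1/2) / (2 powr (mu$i) * Gamma (mu$i+1))))"
  proof (rule prod.cong[OF refl])
    fix i
    show "(\<integral>\<^sup>+t. F (axis i 1) t \<partial>lborel) = ennreal ((x$i * z$i) powr (mu$i+1/2) / (2 powr (mu$i) * Gamma (mu$i+1)))"
      unfolding F_def inner_axis using kernel1[of "mu$i" "x$i" "z$i"] mu x z by (simp add: Rpos_def)
  qed
  also have "\<dots> = ennreal (\<Prod>i\<in>UNIV. (x$i * z$i) powr (mu$i+1/2) / (2 powr (mu$i) * Gamma (mu$i+1)))"
    using mu by (intro prod_ennreal divide_nonneg_pos Cfac_pos) auto
  also have "(\<Prod>i\<in>UNIV. (x$i * z$i) powr (mu$i+1/2) / (2 powr (mu$i) * Gamma (mu$i+1)))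
      = rho mu x * rho mu z / Cmu mu"
    unfolding rho_def Cmu_def prod_dividef[symmetric] prod.distrib[symmetric]
    using x z by (intro prod.cong[OF refl]) (auto simp: Rpos_def powr_mult)
  finally show ?thesis .
qed



lemma rfun_rho: assumes "y \<in> Rpos" shows "rfun mu y * rho mu y = 1"
proof -
  have "rfun mu y * rho mu y = (\<Prod>i\<in>UNIV. (y$i) powr (- mu $ i - 1/2) * (y$i) powr (mu $ i + 1/2))"
    unfolding rfun_def rho_def prod.distrib ..
  also have "\<dots> = 1"
  proof (intro prod.neutral ballI)
    fix i have "y$i > 0" using assms by (simp add: Rpos_def)
    then show "(y$i) powr (- mu $ i - 1/2) * (y$i) powr (mu $ i + 1/2) = 1"
      by (simp add: powr_add[symmetric])
  qed
  finally show ?thesis .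
qed

lemma rfun_pos: assumes "y \<in> Rpos" shows "rfun mu y > 0"
proof -
  have "\<forall>i. y$i > 0" using assms by (simp add: Rpos_def)
  then show ?thesis unfolding rfun_def by (intro prod_pos) (metis powr_gt_zero less_irrefl)
qed

lemma sr_rho: assumes "y \<in> Rpos" shows "sfun mu y * rfun mu y = rho mu y / Cmu mu"
proof -
  have "(\<Prod>i\<in>UNIV. (y$i) powr (2 * mu $ i + 1)) * rfun mu y
      = (\<Prod>i\<in>UNIV. (y$i) powr (2 * mu $ i + 1) * (y$i) powr (- mu $ i - 1/2))"
    unfolding rfun_def prod.distrib ..
  also have "\<dots> = rho mu y"
    unfolding rho_def
  proof (rule prod.cong[OF refl])
    fix i have "y$i > 0" using assms by (simp add: Rpos_def)
    then show "(y$i) powr (2 * mu $ i + 1) * (y$i) powr (- mu $ i - 1/2) = (y$i) powr (mu $ i + 1/2)"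
      by (simp add: powr_add[symmetric])
  qed
  finally show ?thesis unfolding sfun_def by simp
qed

lemma Dmu_support:
  fixes x y z :: "real^'n"
  assumes "Dmu mu x y z \<noteq> 0"
  shows "dist y x < norm z"
proof -
  have c: "\<bar>x$i - y$i\<bar> < z$i" for i
  proof -
    have "Dfun (mu$i) (x$i) (y$i) (z$i) \<noteq> 0" using assms unfolding Dmu_def
      by (metis UNIV_I finite prod_zero)
    then show ?thesis by (auto simp: Dfun_def split: if_splits)
  qed
  have "(\<Sum>i\<in>UNIV. (norm ((y - x)$i))^2) < (\<Sum>i\<in>UNIV. (norm (z$i))^2)"
  proof (rule sum_strict_mono)
    fix i :: 'n
    have "\<bar>y$i - x$i\<bar> < \<bar>z$i\<bar>" using c[of i] by (simp add: abs_minus_commute)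
    then have "\<bar>y$i - x$i\<bar>^2 < \<bar>z$i\<bar>^2" by (intro power_strict_mono) auto
    then show "(norm ((y - x)$i))^2 < (norm (z$i))^2" by simp
  qed auto
  then have "sqrt (\<Sum>i\<in>UNIV. (norm ((y - x)$i))^2) < sqrt (\<Sum>i\<in>UNIV. (norm (z$i))^2)"
    by simp
  then show ?thesis by (simp add: dist_norm norm_vec_def L2_set_def)
qed

lemma AE_fst_pair:
  fixes M1 :: "'a measure" and M2 :: "'b measure"
  assumes "sigma_finite_measure M2" "AE y in M1. Q y"
  shows "AE p in M1 \<Otimes>\<^sub>M M2. Q (fst p)"
proof -
  obtain N where N: "N \<in> null_sets M1" "{y \<in> space M1. \<not> Q y} \<subseteq> N"
    using assms(2) by (auto elim!: AE_E)
  have "N \<times> space M2 \<in> null_sets (M1 \<Otimes>\<^sub>M M2)"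
  proof -
    interpret sigma_finite_measure M2 by fact
    have "emeasure (M1 \<Otimes>\<^sub>M M2) (N \<times> space M2) = emeasure M1 N * emeasure M2 (space M2)"
      using N by (intro emeasure_pair_measure_Times) auto
    then show ?thesis using N by (auto simp: null_sets_def)
  qed
  moreover have "{p \<in> space (M1 \<Otimes>\<^sub>M M2). \<not> Q (fst p)} \<subseteq> N \<times> space M2"
    using N by (auto simp: space_pair_measure)
  ultimately show ?thesis by (intro AE_I'[of "N \<times> space M2"]) auto
qed

lemma pair_sf: "pair_sigma_finite (lborel :: (real^'n) measure) (lborel :: (real^'n) measure)"
  by (simp add: pair_sigma_finite_def lborel.sigma_finite_measure_axioms)

lemma tonelli_kernel:
  fixes mu x :: "real^'n" and psi :: "real^'n \<Rightarrow> real"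
  assumes mu: "\<forall>i. mu $ i > -1/2" and x: "x \<in> Rpos"
    and psi[measurable]: "psi \<in> borel_measurable lborel" and psin: "\<And>z. psi z \<ge> 0"
  shows "(\<integral>\<^sup>+p. ennreal (indicator (Rpos \<times> Rpos) p * Dmu mu x (fst p) (snd p) * rho mu (fst p) * psi (snd p))
            \<partial>(lborel \<Otimes>\<^sub>M lborel))
       = (\<integral>\<^sup>+z. ennreal (indicator Rpos z * (rho mu x * rho mu z / Cmu mu) * psi z) \<partial>lborel)"
proof -
  interpret pair_sigma_finite "lborel :: (real^'n) measure" "lborel :: (real^'n) measure" by (rule pair_sf)
  have "(\<integral>\<^sup>+p. ennreal (indicator (Rpos \<times> Rpos) p * Dmu mu x (fst p) (snd p) * rho mu (fst p) * psi (snd p))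
            \<partial>(lborel \<Otimes>\<^sub>M lborel))
      = (\<integral>\<^sup>+z. \<integral>\<^sup>+y. ennreal (indicator (Rpos \<times> Rpos) (y,z) * Dmu mu x y z * rho mu y * psi z) \<partial>lborel \<partial>lborel)"
    by (subst pair_sigma_finite.nn_integral_snd[OF pair_sf, symmetric]) (auto simp: indicator_def)
  also have "\<dots> = (\<integral>\<^sup>+z. ennreal (indicator Rpos z * (rho mu x * rho mu z / Cmu mu) * psi z) \<partial>lborel)"
  proof (rule nn_integral_cong)
    fix z :: "real^'n"
    show "(\<integral>\<^sup>+y. ennreal (indicator (Rpos \<times> Rpos) (y,z) * Dmu mu x y z * rho mu y * psi z) \<partial>lborel)
        = ennreal (indicator Rpos z * (rho mu x * rho mu z / Cmu mu) * psi z)"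
    proof (cases "z \<in> Rpos")
      case True
      have "(\<integral>\<^sup>+y. ennreal (indicator (Rpos \<times> Rpos) (y,z) * Dmu mu x y z * rho mu y * psi z) \<partial>lborel)
          = (\<integral>\<^sup>+y. ennreal (psi z) * ennreal (indicator Rpos y * Dmu mu x y z * rho mu y) \<partial>lborel)"
        using True psin mu
        by (intro nn_integral_cong) (auto simp: indicator_def ennreal_mult'[symmetric] mult_ac
               intro!: mult_nonneg_nonneg Dmu_nonneg rho_nonneg)
      also have "\<dots> = ennreal (psi z) * ennreal (rho mu x * rho mu z / Cmu mu)"
        by (subst nn_integral_cmult) (auto simp: kernelN[OF mu x True])
      also have "\<dots> = ennreal (indicator Rpos z * (rho mu x * rho mu z / Cmu mu) * psi z)"
        using True psin mu Cmu_pos[OF mu]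
        by (simp add: ennreal_mult'[symmetric] mult_ac rho_nonneg)
      finally show ?thesis .
    qed (simp add: indicator_def)
  qed
  finally show ?thesis .
qed



lemma key:
  fixes mu x :: "real^'n" and f phi :: "real^'n \<Rightarrow> real" and K eps delta :: real
  assumes mu: "\<forall>i. mu $ i > -1/2" and x: "x \<in> Rpos"
    and fm: "(\<lambda>y. indicator Rpos y * f y) \<in> borel_measurable lborel"
    and pm: "(\<lambda>z. indicator Rpos z * phi z) \<in> borel_measurable lborel"
    and pn: "\<forall>z\<in>Rpos. phi z \<ge> 0"
    and pL1: "set_integrable lborel Rpos (\<lambda>z. phi z * sfun mu z * rfun mu z)"
    and p1: "(LINT z : Rpos | lborel. phi z * sfun mu z * rfun mu z) = 1"
    and K: "K \<ge> 0" and eps: "eps \<ge> 0"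
    and bK: "AE y in lborel. y \<in> Rpos \<longrightarrow> \<bar>rfun mu y * f y - rfun mu x * f x\<bar> \<le> K"
    and be: "AE y in lborel. y \<in> Rpos \<and> dist y x < delta \<longrightarrow> \<bar>rfun mu y * f y - rfun mu x * f x\<bar> \<le> eps"
  shows "\<bar>hconv mu f phi x - f x\<bar>
    \<le> rho mu x * (eps + K * (LINT z : {z\<in>Rpos. norm z > delta} | lborel. phi z * rfun mu z * sfun mu z))"
proof -
  define g where "g y = rfun mu y * f y" for y
  define ph where "ph z = indicator Rpos z * phi z" for z
  define fR where "fR y = indicator Rpos y * f y" for y
  define rR where "rR y = indicator Rpos y * rho mu y" for y
  define T where "T = (LINT z : {z\<in>Rpos. norm z > delta} | lborel. phi z * rfun mu z * sfun mu z)"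
  define wt where "wt z = eps + K * indicator {z. norm z > delta} z" for z :: "real^'n"
  define P where "P = (lborel \<Otimes>\<^sub>M lborel :: ((real^'n) \<times> (real^'n)) measure)"
  have [measurable]: "ph \<in> borel_measurable lborel" proof -
    have "ph = (\<lambda>z. indicator Rpos z * phi z)" by (simp add: fun_eq_iff ph_def)
    then show ?thesis using pm by simp
  qed
  have [measurable]: "fR \<in> borel_measurable lborel" proof -
    have "fR = (\<lambda>z. indicator Rpos z * f z)" by (simp add: fun_eq_iff fR_def)
    then show ?thesis using fm by simp
  qed
  have [measurable]: "rR \<in> borel_measurable lborel" unfolding rR_def by measurable
  have [measurable]: "wt \<in> borel_measurable lborel" unfolding wt_def by measurable
  have phn: "ph z \<ge> 0" for z using pn by (simp add: ph_def indicator_def)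
  have wtn: "wt z \<ge> 0" for z using K eps by (simp add: wt_def)
  have Dn: "Dmu mu x y z \<ge> 0" for y z using Dmu_nonneg[OF mu] .
  have rRn: "rR y \<ge> 0" for y by (simp add: rR_def rho_nonneg)
  define Fi where "Fi = (\<lambda>p. indicator (Rpos \<times> Rpos) p *\<^sub>R (Dmu mu x (fst p) (snd p) * f (fst p) * phi (snd p)))" 
  define G where "G = (\<lambda>p. Dmu mu x (fst p) (snd p) * rR (fst p) * ph (snd p))" 
  define H where "H = (\<lambda>p. G p * wt (snd p))" 
  have hc: "hconv mu f phi x = integral\<^sup>L P Fi"
    by (simp add: hconv_def set_lebesgue_integral_def Fi_def P_def)
  have Fi_eq: "Fi p = Dmu mu x (fst p) (snd p) * fR (fst p) * ph (snd p)" for p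
    by (cases p) (auto simp: Fi_def fR_def ph_def indicator_def)
  have [measurable]: "Fi \<in> borel_measurable P" proof -
    have e: "Fi = (\<lambda>p. Dmu mu x (fst p) (snd p) * fR (fst p) * ph (snd p))" using Fi_eq by auto
    show ?thesis unfolding e P_def by measurable
  qed
  have [measurable]: "G \<in> borel_measurable P" unfolding G_def P_def by measurable
  have [measurable]: "H \<in> borel_measurable P" unfolding H_def G_def P_def by measurable
  have Gn: "G p \<ge> 0" for p unfolding G_def using Dn rRn phn by (intro mult_nonneg_nonneg)
  have Hn: "H p \<ge> 0" for p unfolding H_def using Gn wtn by (intro mult_nonneg_nonneg)
  have tk: "(\<integral>\<^sup>+p. ennreal (G p * psi (snd p)) \<partial>P)
      = ennreal (rho mu x) * (\<integral>\<^sup>+z. ennreal (indicator Rpos z *\<^sub>R (phi z * sfun mu z * rfun mu z) * psi z) \<partial>lborel)"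
    if [measurable]: "psi \<in> borel_measurable lborel" and psin: "\<And>z. psi z \<ge> 0" for psi
  proof -
    have "(\<integral>\<^sup>+p. ennreal (G p * psi (snd p)) \<partial>P)
       = (\<integral>\<^sup>+p. ennreal (indicator (Rpos \<times> Rpos) p * Dmu mu x (fst p) (snd p) * rho mu (fst p) * (ph (snd p) * psi (snd p))) \<partial>P)"
      by (intro nn_integral_cong) (auto simp: G_def rR_def ph_def indicator_def mult.assoc)
    also have "\<dots> = (\<integral>\<^sup>+z. ennreal (indicator Rpos z * (rho mu x * rho mu z / Cmu mu) * (ph z * psi z)) \<partial>lborel)"
      unfolding P_def using phn psin by (intro tonelli_kernel mu x) (auto intro: mult_nonneg_nonneg)
    also have "\<dots> = (\<integral>\<^sup>+z. ennreal (rho mu x) * ennreal (indicator Rpos z *\<^sub>R (phi z * sfun mu z * rfun mu z) * psi z) \<partial>lborel)"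
    proof (intro nn_integral_cong)
      fix z :: "real^'n"
      show "ennreal (indicator Rpos z * (rho mu x * rho mu z / Cmu mu) * (ph z * psi z))
          = ennreal (rho mu x) * ennreal (indicator Rpos z *\<^sub>R (phi z * sfun mu z * rfun mu z) * psi z)"
      proof (cases "z \<in> Rpos")
        case True
        then have "indicator Rpos z * (rho mu x * rho mu z / Cmu mu) * (ph z * psi z)
            = rho mu x * (indicator Rpos z *\<^sub>R (phi z * sfun mu z * rfun mu z) * psi z)"
          by (simp add: ph_def sr_rho mult.assoc)
        moreover have "0 \<le> indicator Rpos z *\<^sub>R (phi z * sfun mu z * rfun mu z) * psi z"
          using True pn psin rfun_pos[OF True, of mu] sr_rho[OF True, of mu] rho_pos[OF True, of mu] Cmu_pos[OF mu]
          by (auto intro!: mult_nonneg_nonneg simp: mult.assoc)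
        ultimately show ?thesis by (metis ennreal_mult rho_nonneg)
      qed simp
    qed
    also have "\<dots> = ennreal (rho mu x) * (\<integral>\<^sup>+z. ennreal (indicator Rpos z *\<^sub>R (phi z * sfun mu z * rfun mu z) * psi z) \<partial>lborel)"
    proof (rule nn_integral_cmult)
      have [measurable]: "(\<lambda>z. indicator Rpos z *\<^sub>R (phi z * sfun mu z * rfun mu z)) \<in> borel_measurable lborel"
        using pL1 by (simp add: set_integrable_def)
      show "(\<lambda>z. ennreal (indicator Rpos z *\<^sub>R (phi z * sfun mu z * rfun mu z) * psi z)) \<in> borel_measurable lborel"
        by measurable
    qed
    finally show ?thesis .
  qed
  have IG: "has_bochner_integral P G (rho mu x)"
  proof (rule has_bochner_integral_nn_integral)
    show "(\<integral>\<^sup>+p. ennreal (G p) \<partial>P) = ennreal (rho mu x)"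
    proof -
      have "(\<integral>\<^sup>+p. ennreal (G p) \<partial>P) = (\<integral>\<^sup>+p. ennreal (G p * (\<lambda>_. 1) (snd p)) \<partial>P)" by simp
      also have "\<dots> = ennreal (rho mu x) * (\<integral>\<^sup>+z. ennreal (indicator Rpos z *\<^sub>R (phi z * sfun mu z * rfun mu z) * 1) \<partial>lborel)"
        by (rule tk) auto
      also have "(\<integral>\<^sup>+z. ennreal (indicator Rpos z *\<^sub>R (phi z * sfun mu z * rfun mu z) * 1) \<partial>lborel) = ennreal 1"
      proof -
        have "(\<integral>\<^sup>+z. ennreal (indicator Rpos z *\<^sub>R (phi z * sfun mu z * rfun mu z)) \<partial>lborel)
            = ennreal (LINT z : Rpos | lborel. phi z * sfun mu z * rfun mu z)"
          unfolding set_lebesgue_integral_def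
        proof (rule nn_integral_eq_integral)
          show "integrable lborel (\<lambda>z. indicator Rpos z *\<^sub>R (phi z * sfun mu z * rfun mu z))"
            using pL1 by (simp add: set_integrable_def)
          show "AE z in lborel. 0 \<le> indicator Rpos z *\<^sub>R (phi z * sfun mu z * rfun mu z)"
          proof (intro AE_I2)
            fix z :: "real^'n"
            show "0 \<le> indicator Rpos z *\<^sub>R (phi z * sfun mu z * rfun mu z)"
            proof (cases "z \<in> Rpos")
              case True
              then show ?thesis using pn sr_rho[OF True, of mu] rho_pos[OF True, of mu] Cmu_pos[OF mu]
                by (simp add: mult.assoc)
            qed simp
          qed
        qed
        then show ?thesis using p1 by simp
      qed
      finally show ?thesis by simp
    qed
  qed (use Gn rho_nonneg in auto)

  define A where "A = (\<lambda>z. indicator Rpos z *\<^sub>R (phi z * sfun mu z * rfun mu z))"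
  define B where "B = (\<lambda>z. indicator {z\<in>Rpos. norm z > delta} z *\<^sub>R (phi z * rfun mu z * sfun mu z))"
  define h where "h = (\<lambda>z. indicator Rpos z *\<^sub>R (phi z * sfun mu z * rfun mu z) * wt z)"
  have Ai: "integrable lborel A" using pL1 by (simp add: set_integrable_def A_def)
  have Aint: "integral\<^sup>L lborel A = 1" using p1 by (simp add: set_lebesgue_integral_def A_def)
  have sB: "{z\<in>Rpos. norm z > delta} \<in> sets lborel" by measurable
  have Bs: "set_integrable lborel {z\<in>Rpos. norm z > delta} (\<lambda>z. phi z * rfun mu z * sfun mu z)"
  proof (rule set_integrable_subset[OF _ sB])
    show "set_integrable lborel Rpos (\<lambda>z. phi z * rfun mu z * sfun mu z)"
      using pL1 by (simp add: mult_ac)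
  qed auto
  have Bi: "integrable lborel B" using Bs by (simp add: set_integrable_def B_def)
  have Bint: "integral\<^sup>L lborel B = T" by (simp add: set_lebesgue_integral_def B_def T_def)
  have heq: "h = (\<lambda>z. eps * A z + K * B z)"
    by (auto simp: fun_eq_iff h_def A_def B_def wt_def indicator_def algebra_simps)
  have hI: "has_bochner_integral lborel h (eps + K * T)"
  proof -
    have "has_bochner_integral lborel (\<lambda>z. eps * A z + K * B z) (eps * 1 + K * T)"
      by (intro has_bochner_integral_add has_bochner_integral_mult_right)
         (use Ai Bi Aint Bint in \<open>auto simp: has_bochner_integral_iff\<close>)
    then show ?thesis unfolding heq by simp
  qed
  have hn: "h z \<ge> 0" for z
  proof (cases "z \<in> Rpos")
    case True
    have "h z = phi z * (sfun mu z * rfun mu z) * wt z" using True by (simp add: h_def mult_ac)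
    also have "\<dots> = phi z * (rho mu z / Cmu mu) * wt z" using sr_rho[OF True, of mu] by simp
    also have "\<dots> \<ge> 0" using pn True wtn[of z] rho_pos[OF True, of mu] Cmu_pos[OF mu]
      by (intro mult_nonneg_nonneg divide_nonneg_pos) auto
    finally show ?thesis .
  qed (simp add: h_def)
  have ET: "eps + K * T \<ge> 0"
    using hI hn by (metis has_bochner_integral_integral_eq has_bochner_integral_integrable integral_nonneg_AE AE_I2)
  have IH: "has_bochner_integral P H (rho mu x * (eps + K * T))"
  proof (rule has_bochner_integral_nn_integral)
    have "(\<integral>\<^sup>+p. ennreal (H p) \<partial>P) = (\<integral>\<^sup>+p. ennreal (G p * wt (snd p)) \<partial>P)" by (simp add: H_def)
    also have "\<dots> = ennreal (rho mu x) * (\<integral>\<^sup>+z. ennreal (h z) \<partial>lborel)"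
      unfolding h_def by (rule tk) (auto intro: wtn)
    also have "(\<integral>\<^sup>+z. ennreal (h z) \<partial>lborel) = ennreal (eps + K * T)"
    proof -
      have "(\<integral>\<^sup>+z. ennreal (h z) \<partial>lborel) = ennreal (integral\<^sup>L lborel h)"
        using hI hn by (intro nn_integral_eq_integral) (auto simp: has_bochner_integral_iff)
      then show ?thesis using hI by (simp add: has_bochner_integral_integral_eq)
    qed
    finally show "(\<integral>\<^sup>+p. ennreal (H p) \<partial>P) = ennreal (rho mu x * (eps + K * T))"
      using ET by (metis ennreal_mult rho_nonneg)
  qed (use Hn rho_nonneg[of mu x] ET in \<open>auto intro: mult_nonneg_nonneg\<close>)
  have AEq: "AE y in lborel. (y \<in> Rpos \<longrightarrow> \<bar>g y - g x\<bar> \<le> K) \<and> (y \<in> Rpos \<and> dist y x < delta \<longrightarrow> \<bar>g y - g x\<bar> \<le> eps)"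
    using bK be unfolding g_def by (auto elim: AE_mp)
  have AEP: "AE p in P. (fst p \<in> Rpos \<longrightarrow> \<bar>g (fst p) - g x\<bar> \<le> K) \<and> (fst p \<in> Rpos \<and> dist (fst p) x < delta \<longrightarrow> \<bar>g (fst p) - g x\<bar> \<le> eps)"
    unfolding P_def by (rule AE_fst_pair[OF lborel.sigma_finite_measure_axioms AEq])
  have diff_eq: "Fi p - g x * G p = Dmu mu x (fst p) (snd p) * rR (fst p) * ph (snd p) * (g (fst p) - g x)" for p
  proof -
    have "fR (fst p) = rR (fst p) * g (fst p)"
    proof (cases "fst p \<in> Rpos")
      case True
      then show ?thesis using rfun_rho[OF True, of mu]
        by (simp add: fR_def rR_def g_def) (metis mult.assoc mult.commute mult_1)
    qed (simp add: fR_def rR_def)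
    then show ?thesis unfolding Fi_eq G_def by (simp add: algebra_simps)
  qed
  have AEb: "AE p in P. \<bar>Fi p - g x * G p\<bar> \<le> H p"
    using AEP
  proof (rule eventually_mono)
    fix p :: "(real^'n) \<times> (real^'n)"
    assume Q: "(fst p \<in> Rpos \<longrightarrow> \<bar>g (fst p) - g x\<bar> \<le> K) \<and> (fst p \<in> Rpos \<and> dist (fst p) x < delta \<longrightarrow> \<bar>g (fst p) - g x\<bar> \<le> eps)"
    define c where "c = Dmu mu x (fst p) (snd p) * rR (fst p) * ph (snd p)"
    have c0: "c \<ge> 0" unfolding c_def using Dn rRn phn by (intro mult_nonneg_nonneg)
    have "\<bar>Fi p - g x * G p\<bar> = c * \<bar>g (fst p) - g x\<bar>"
      unfolding diff_eq c_def[symmetric] using c0 by (simp add: abs_mult)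
    also have "\<dots> \<le> c * wt (snd p)"
    proof (cases "c = 0")
      case False
      then have y: "fst p \<in> Rpos" and z: "snd p \<in> Rpos" and D: "Dmu mu x (fst p) (snd p) \<noteq> 0"
        by (auto simp: c_def rR_def ph_def indicator_def split: if_splits)
      have dd: "dist (fst p) x < norm (snd p)" using Dmu_support[OF D] .
      have "\<bar>g (fst p) - g x\<bar> \<le> wt (snd p)"
      proof (cases "norm (snd p) > delta")
        case True
        then show ?thesis using Q y eps by (simp add: wt_def)
      next
        case False
        then have "dist (fst p) x < delta" using dd by simp
        then show ?thesis using Q y K False by (simp add: wt_def)
      qed
      then show ?thesis using c0 by (intro mult_left_mono)
    qed simp
    also have "\<dots> = H p" by (simp add: H_def G_def c_def)
    finally show "\<bar>Fi p - g x * G p\<bar> \<le> H p" .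
  qed
  have HI: "integrable P H" using IH by (simp add: has_bochner_integral_iff)
  have GI: "integrable P G" using IG by (simp add: has_bochner_integral_iff)
  have DI: "integrable P (\<lambda>p. Fi p - g x * G p)"
  proof (rule Bochner_Integration.integrable_bound[OF HI])
    show "(\<lambda>p. Fi p - g x * G p) \<in> borel_measurable P" by measurable
    show "AE p in P. norm (Fi p - g x * G p) \<le> norm (H p)"
      using AEb Hn by (auto elim!: eventually_mono)
  qed
  have FiI: "integrable P Fi"
  proof -
    have "integrable P (\<lambda>p. (Fi p - g x * G p) + g x * G p)"
      using DI GI by (intro Bochner_Integration.integrable_add integrable_mult_right)
    then show ?thesis by simp
  qed
  have fx: "f x = g x * rho mu x"
    using rfun_rho[OF x, of mu] by (simp add: g_def)
  have "hconv mu f phi x - f x = integral\<^sup>L P (\<lambda>p. Fi p - g x * G p)"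
    using FiI GI IG by (simp add: hc fx has_bochner_integral_integral_eq)
  also have "\<bar>\<dots>\<bar> \<le> integral\<^sup>L P (\<lambda>p. \<bar>Fi p - g x * G p\<bar>)"
    by (rule integral_abs_bound)
  also have "\<dots> \<le> integral\<^sup>L P H"
    using AEb DI HI by (intro integral_mono_AE) auto
  also have "\<dots> = rho mu x * (eps + K * T)" using IH by (simp add: has_bochner_integral_integral_eq)
  finally show ?thesis unfolding T_def .
qed



lemma rfun_cont: "x0 \<in> Rpos \<Longrightarrow> continuous (at x0 within Rpos) (rfun mu)"
  unfolding rfun_def Rpos_def by (intro continuous_intros) (auto, metis less_irrefl)

lemma Rpos_measure_pos: "emeasure (restrict_space lborel (Rpos :: (real^'n) set)) (space (restrict_space lborel (Rpos :: (real^'n) set))) \<noteq> 0"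
proof -
  have sub: "box (vec 1) (vec 2) \<subseteq> (Rpos :: (real^'n) set)"
    by (auto simp: mem_box_cart Rpos_def) (smt (verit))
  have "emeasure lborel (box (vec 1) (vec 2) :: (real^'n) set) = 1"
  proof (subst emeasure_lborel_box)
    show "b \<in> Basis \<Longrightarrow> vec 1 \<bullet> b \<le> vec 2 \<bullet> b" for b :: "real^'n"
      by (auto simp: Basis_vec_def inner_axis)
    have "prod ((\<bullet>) (vec 2 - vec 1 :: real^'n)) Basis = 1"
      unfolding prod_Basis_vec by (simp add: inner_axis)
    then show "ennreal (prod ((\<bullet>) (vec 2 - vec 1 :: real^'n)) Basis) = 1" by simp
  qed
  moreover have "emeasure lborel (box (vec 1) (vec 2) :: (real^'n) set) \<le> emeasure lborel (Rpos :: (real^'n) set)"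
    by (rule emeasure_mono[OF sub]) (rule Rpos_lborel)
  ultimately have "emeasure lborel (Rpos :: (real^'n) set) \<noteq> 0" by auto
  then show ?thesis by (simp add: emeasure_restrict_space)
qed

lemma hconv_measurable:
  fixes mu :: "real^'n" and f phi :: "real^'n \<Rightarrow> real"
  assumes fm[measurable]: "(\<lambda>y. indicator Rpos y * f y) \<in> borel_measurable lborel"
    and pm[measurable]: "(\<lambda>z. indicator Rpos z * phi z) \<in> borel_measurable lborel"
  shows "(\<lambda>x. hconv mu f phi x) \<in> borel_measurable lborel"
proof -
  define fR where "fR = (\<lambda>y. indicator Rpos y * f y)"
  define ph where "ph = (\<lambda>z. indicator Rpos z * phi z)"
  have [measurable]: "fR \<in> borel_measurable lborel" "ph \<in> borel_measurable lborel"
    using fm pm by (simp_all add: fR_def ph_def)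
  have e: "hconv mu f phi = (\<lambda>x. integral\<^sup>L (lborel \<Otimes>\<^sub>M lborel)
              (\<lambda>p. Dmu mu x (fst p) (snd p) * fR (fst p) * ph (snd p)))"
    unfolding hconv_def set_lebesgue_integral_def
    by (intro ext Bochner_Integration.integral_cong refl)
       (auto simp: fR_def ph_def indicator_def split: if_splits)
  have sf: "sigma_finite_measure (lborel \<Otimes>\<^sub>M lborel :: ((real^'n) \<times> (real^'n)) measure)"
    by (intro sigma_finite_pair_measure lborel.sigma_finite_measure_axioms)
  have m: "(\<lambda>q. Dmu mu (fst q) (fst (snd q)) (snd (snd q)) * fR (fst (snd q)) * ph (snd (snd q)))
     \<in> borel_measurable ((lborel::(real^'n) measure) \<Otimes>\<^sub>M ((lborel::(real^'n) measure) \<Otimes>\<^sub>M (lborel::(real^'n) measure)))"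
    by measurable
  show ?thesis unfolding e
    by (rule sigma_finite_measure.borel_measurable_lebesgue_integral[OF sf]) (simp add: split_beta' m)
qed


theorem lemma3p5:
  fixes \<mu> :: "real^'n" and \<phi> :: "nat \<Rightarrow> real^'n \<Rightarrow> real"
    and f :: "real^'n \<Rightarrow> real" and x0 :: "real^'n"
  assumes mu: "\<forall>i. \<mu> $ i > - 1/2"
    and phiL1: "\<forall>m. in_L1_sr \<mu> (\<phi> m)"
    and phi_nonneg: "\<forall>m. \<forall>x\<in>Rpos. \<phi> m x \<ge> 0"
    and phi_int: "\<forall>m. (LINT x : Rpos | lborel. \<phi> m x * sfun \<mu> x * rfun \<mu> x) = 1"
    and phi_conc: "\<forall>\<eta>>0. (\<lambda>m. LINT x : {x\<in>Rpos. norm x > \<eta>} | lborel.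
                          \<phi> m x * rfun \<mu> x * sfun \<mu> x) \<longlonglongrightarrow> 0"
    and fLinf: "in_Linf_r \<mu> f"
    and x0: "x0 \<in> Rpos"
    and fcont: "continuous (at x0 within Rpos) f"
  shows "(\<lambda>m. hconv \<mu> f (\<phi> m) x0) \<longlonglongrightarrow> f x0
         \<and> (uniformly_continuous_on Rpos (\<lambda>x. rfun \<mu> x * f x) \<longrightarrow>
              (\<lambda>m. Linf_r_norm \<mu> (\<lambda>x. hconv \<mu> f (\<phi> m) x - f x)) \<longlonglongrightarrow> 0)"
proof -
  define g where "g y = rfun \<mu> y * f y" for y
  define T where "T m d = (LINT x : {x\<in>Rpos. norm x > d} | lborel. \<phi> m x * rfun \<mu> x * sfun \<mu> x)" for m d
  have fmr[measurable]: "f \<in> borel_measurable (restrict_space lborel Rpos)"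
    and fin: "Linf_r_norm \<mu> f < \<infinity>" using fLinf by (simp_all add: in_Linf_r_def)
  have fm: "(\<lambda>y. indicator Rpos y * f y) \<in> borel_measurable lborel"
    using fmr by (subst (asm) borel_measurable_restrict_space_iff) auto
  obtain M where M0: "M \<ge> 0" and bM: "AE y in lborel. y \<in> Rpos \<longrightarrow> \<bar>g y\<bar> \<le> M"
  proof -
    define E where "E = Linf_r_norm \<mu> f"
    define M where "M = real_of_ereal (max E 0)"
    have EM: "max E 0 = ereal M"
      using fin unfolding M_def E_def by (cases "Linf_r_norm \<mu> f") (auto simp: max_def zero_ereal_def)
    have M0: "M \<ge> 0" using EM by (metis ereal_less_eq(5) max.cobounded2)
    have "AE x in restrict_space lborel Rpos. ereal \<bar>rfun \<mu> x * f x\<bar> \<le> E"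
      unfolding E_def Linf_r_norm_def by (rule esssup_AE)
    then have "AE x in restrict_space lborel Rpos. \<bar>g x\<bar> \<le> M"
    proof (rule eventually_mono)
      fix x assume "ereal \<bar>rfun \<mu> x * f x\<bar> \<le> E"
      then have "ereal \<bar>rfun \<mu> x * f x\<bar> \<le> ereal M" using EM by (metis max.coboundedI1)
      then show "\<bar>g x\<bar> \<le> M" by (simp add: g_def)
    qed
    then have "AE y in lborel. y \<in> Rpos \<longrightarrow> \<bar>g y\<bar> \<le> M"
      by (subst (asm) AE_restrict_space_iff) auto
    then show ?thesis using that M0 by blast
  qed
  have pL1: "set_integrable lborel Rpos (\<lambda>z. \<phi> m z * sfun \<mu> z * rfun \<mu> z)" for m
    using phiL1 by (simp add: in_L1_sr_def)
  have pm: "(\<lambda>z. indicator Rpos z * \<phi> m z) \<in> borel_measurable lborel" for m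
  proof -
    have [measurable]: "(\<lambda>z. indicator Rpos z *\<^sub>R (\<phi> m z * sfun \<mu> z * rfun \<mu> z)) \<in> borel_measurable lborel"
      using pL1[of m] unfolding set_integrable_def by (rule borel_measurable_integrable)
    have "(\<lambda>z. indicator Rpos z *\<^sub>R (\<phi> m z * sfun \<mu> z * rfun \<mu> z) * (Cmu \<mu> / rho \<mu> z)) \<in> borel_measurable lborel"
      by measurable
    moreover have "(\<lambda>z. indicator Rpos z *\<^sub>R (\<phi> m z * sfun \<mu> z * rfun \<mu> z) * (Cmu \<mu> / rho \<mu> z))
        = (\<lambda>z. indicator Rpos z * \<phi> m z)"
    proof
      fix z :: "real^'n"
      show "indicator Rpos z *\<^sub>R (\<phi> m z * sfun \<mu> z * rfun \<mu> z) * (Cmu \<mu> / rho \<mu> z) = indicator Rpos z * \<phi> m z"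
      proof (cases "z \<in> Rpos")
        case True
        then show ?thesis using sr_rho[OF True, of \<mu>] rho_pos[OF True, of \<mu>] Cmu_pos[OF mu]
          by (simp add: mult.assoc)
      qed simp
    qed
    ultimately show ?thesis by simp
  qed
  have pn: "\<forall>z\<in>Rpos. \<phi> m z \<ge> 0" for m using phi_nonneg by blast
  have p1: "(LINT z : Rpos | lborel. \<phi> m z * sfun \<mu> z * rfun \<mu> z) = 1" for m using phi_int by blast
  have Tlim: "(\<lambda>m. T m d) \<longlonglongrightarrow> 0" if "d > 0" for d
    using phi_conc that unfolding T_def by blast
  have KEY: "\<bar>hconv \<mu> f (\<phi> m) x - f x\<bar> \<le> rho \<mu> x * (eps + K * T m d)"
    if "x \<in> Rpos" "K \<ge> 0" "eps \<ge> 0"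
       "AE y in lborel. y \<in> Rpos \<longrightarrow> \<bar>g y - g x\<bar> \<le> K"
       "AE y in lborel. y \<in> Rpos \<and> dist y x < d \<longrightarrow> \<bar>g y - g x\<bar> \<le> eps" for x K eps d m
    unfolding T_def
    by (rule key[OF mu that(1) fm pm pn pL1 p1 that(2,3) that(4,5)[unfolded g_def]])
  have part1: "(\<lambda>m. hconv \<mu> f (\<phi> m) x0) \<longlonglongrightarrow> f x0"
  proof (rule tendstoI)
    fix e :: real assume e: "e > 0"
    define R where "R = rho \<mu> x0"
    have R: "R > 0" using rho_pos[OF x0] by (simp add: R_def)
    define eps where "eps = e / (4 * R)"
    have eps: "eps > 0" using e R by (simp add: eps_def)
    have gcont: "continuous (at x0 within Rpos) g"
      unfolding g_def[abs_def] by (intro continuous_mult rfun_cont x0 fcont)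
    obtain d where d: "d > 0" and hd: "\<forall>y\<in>Rpos. dist y x0 < d \<longrightarrow> dist (g y) (g x0) < eps"
      using gcont eps unfolding continuous_within_eps_delta by blast
    define K where "K = M + \<bar>g x0\<bar>"
    have K: "K \<ge> 0" using M0 by (simp add: K_def)
    have bK: "AE y in lborel. y \<in> Rpos \<longrightarrow> \<bar>g y - g x0\<bar> \<le> K"
      using bM by (rule eventually_mono) (auto simp: K_def)
    have be: "AE y in lborel. y \<in> Rpos \<and> dist y x0 < d \<longrightarrow> \<bar>g y - g x0\<bar> \<le> eps"
      using hd by (intro AE_I2) (auto simp: dist_real_def less_imp_le)
    have "eventually (\<lambda>m. dist (T m d) 0 < eps / (K + 1)) sequentially"
      using Tlim[OF d] eps K by (intro tendstoD) auto
    then show "eventually (\<lambda>m. dist (hconv \<mu> f (\<phi> m) x0) (f x0) < e) sequentially"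
    proof (rule eventually_mono)
      fix m assume tm: "dist (T m d) 0 < eps / (K + 1)"
      have "K * T m d \<le> K * \<bar>T m d\<bar>" using K by (intro mult_left_mono) auto
      also have "\<dots> \<le> K * (eps / (K + 1))" using tm K by (intro mult_left_mono) auto
      also have "\<dots> \<le> eps" using K eps by (simp add: field_simps)
      finally have KT: "K * T m d \<le> eps" .
      have "\<bar>hconv \<mu> f (\<phi> m) x0 - f x0\<bar> \<le> R * (eps + K * T m d)"
        unfolding R_def using x0 K eps bK be by (intro KEY) (auto simp: less_imp_le)
      also have "\<dots> \<le> R * (2 * eps)" using KT R by (intro mult_left_mono) auto
      also have "\<dots> < e" using R e by (simp add: eps_def)
      finally show "dist (hconv \<mu> f (\<phi> m) x0) (f x0) < e" by (simp add: dist_real_def)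
    qed
  qed
  have part2: "(\<lambda>m. Linf_r_norm \<mu> (\<lambda>x. hconv \<mu> f (\<phi> m) x - f x)) \<longlonglongrightarrow> 0"
    if uc: "uniformly_continuous_on Rpos (\<lambda>x. rfun \<mu> x * f x)"
  proof -
    define S where "S m = Linf_r_norm \<mu> (\<lambda>x. hconv \<mu> f (\<phi> m) x - f x)" for m
    have meas: "(\<lambda>x. ereal \<bar>rfun \<mu> x * (hconv \<mu> f (\<phi> m) x - f x)\<bar>) \<in> borel_measurable (restrict_space lborel Rpos)" for m
    proof -
      have [measurable]: "(\<lambda>x. hconv \<mu> f (\<phi> m) x) \<in> borel_measurable (restrict_space lborel Rpos)"
        by (rule measurable_restrict_space1) (rule hconv_measurable[OF fm pm])
      have [measurable]: "rfun \<mu> \<in> borel_measurable (restrict_space lborel Rpos)"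
        by (rule measurable_restrict_space1) simp
      show ?thesis by measurable
    qed
    have S0: "S m \<ge> 0" for m
    proof (rule ccontr)
      assume "\<not> S m \<ge> 0"
      then have neg: "S m < 0" by simp
      have "AE x in restrict_space lborel Rpos. ereal \<bar>rfun \<mu> x * (hconv \<mu> f (\<phi> m) x - f x)\<bar> \<le> S m"
        unfolding S_def Linf_r_norm_def by (rule esssup_AE)
      then have "AE x in restrict_space lborel (Rpos :: (real^'n) set). False"
      proof (rule eventually_mono)
        fix x assume "ereal \<bar>rfun \<mu> x * (hconv \<mu> f (\<phi> m) x - f x)\<bar> \<le> S m"
        then have "ereal \<bar>rfun \<mu> x * (hconv \<mu> f (\<phi> m) x - f x)\<bar> < 0" using neg by (rule le_less_trans)
        then show False by simp
      qed
      then show False by (metis Rpos_measure_pos ae_filter_eq_bot_iff eventually_False)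
    qed
    have Sle: "eventually (\<lambda>m. S m \<le> ereal e) sequentially" if e: "e > 0" for e
    proof -
      obtain d where d: "d > 0" and hd: "\<forall>x\<in>Rpos. \<forall>y\<in>Rpos. dist y x < d \<longrightarrow> dist (g y) (g x) < e/2"
        using uc e unfolding uniformly_continuous_on_def g_def[abs_def] by (metis half_gt_zero)
      have "eventually (\<lambda>m. dist (T m d) 0 < (e/2) / (2*M + 1)) sequentially"
        using Tlim[OF d] e M0 by (intro tendstoD) auto
      then show ?thesis
      proof (rule eventually_mono)
        fix m assume tm: "dist (T m d) 0 < (e/2) / (2*M + 1)"
        have KT: "2*M * T m d \<le> e/2"
        proof -
          have "2*M * T m d \<le> 2*M * \<bar>T m d\<bar>" using M0 by (intro mult_left_mono) auto
          also have "\<dots> \<le> 2*M * ((e/2) / (2*M + 1))" using tm M0 by (intro mult_left_mono) auto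
          also have "\<dots> \<le> e/2" using M0 e by (simp add: field_simps)
          finally show ?thesis .
        qed
        have "AE x in lborel. x \<in> Rpos \<longrightarrow> ereal \<bar>rfun \<mu> x * (hconv \<mu> f (\<phi> m) x - f x)\<bar> \<le> ereal e"
          using bM
        proof (rule eventually_mono)
          fix x assume gx: "x \<in> Rpos \<longrightarrow> \<bar>g x\<bar> \<le> M"
          show "x \<in> Rpos \<longrightarrow> ereal \<bar>rfun \<mu> x * (hconv \<mu> f (\<phi> m) x - f x)\<bar> \<le> ereal e"
          proof
            assume x: "x \<in> Rpos"
            have bK: "AE y in lborel. y \<in> Rpos \<longrightarrow> \<bar>g y - g x\<bar> \<le> 2*M"
              using bM by (rule eventually_mono) (use gx x in auto)
            have be: "AE y in lborel. y \<in> Rpos \<and> dist y x < d \<longrightarrow> \<bar>g y - g x\<bar> \<le> e/2"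
              using hd x by (intro AE_I2) (auto simp: dist_real_def less_imp_le)
            have E: "\<bar>hconv \<mu> f (\<phi> m) x - f x\<bar> \<le> rho \<mu> x * (e/2 + 2*M * T m d)"
              using x M0 e bK be by (intro KEY) auto
            have "\<bar>rfun \<mu> x * (hconv \<mu> f (\<phi> m) x - f x)\<bar> = rfun \<mu> x * \<bar>hconv \<mu> f (\<phi> m) x - f x\<bar>"
              using rfun_pos[OF x, of \<mu>] by (simp add: abs_mult)
            also have "\<dots> \<le> rfun \<mu> x * (rho \<mu> x * (e/2 + 2*M * T m d))"
              using rfun_pos[OF x, of \<mu>] E by (intro mult_left_mono) auto
            also have "\<dots> = e/2 + 2*M * T m d" using rfun_rho[OF x, of \<mu>] by (simp add: mult.assoc[symmetric])
            also have "\<dots> \<le> e" using KT by simp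
            finally show "ereal \<bar>rfun \<mu> x * (hconv \<mu> f (\<phi> m) x - f x)\<bar> \<le> ereal e" by simp
          qed
        qed
        then have "AE x in restrict_space lborel Rpos. ereal \<bar>rfun \<mu> x * (hconv \<mu> f (\<phi> m) x - f x)\<bar> \<le> ereal e"
          by (subst AE_restrict_space_iff) auto
        then show "S m \<le> ereal e"
          unfolding S_def Linf_r_norm_def by (rule esssup_I[OF meas])
      qed
    qed
    show ?thesis unfolding S_def[symmetric]
    proof (rule order_tendstoI)
      fix a :: ereal assume "a < 0"
      then show "eventually (\<lambda>m. a < S m) sequentially" using S0 by (intro always_eventually allI) (blast intro: less_le_trans)
    next
      fix a :: ereal assume "0 < a"
      then obtain e where e0: "0 < ereal e" and ea: "ereal e < a" using ereal_dense2 by blast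
      have "e > 0" using e0 by simp
      then show "eventually (\<lambda>m. S m < a) sequentially"
        using Sle[of e] ea by (auto elim: eventually_mono intro: le_less_trans)
    qed
  qed
  show ?thesis using part1 part2 by blast
qed


end
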